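(* Let $(R,\cdot,\alpha)$ be a weakly unital hom-associative ring with weak unit $e$, and let $\delta$ be a derivation on $R$ with $\alpha\circ\delta=\delta\circ\alpha$. Extend $\alpha$ homogeneously to the differential polynomial ring $R[X;\mathrm{id}_R,\delta]$. Then: (i) $a\cdot\delta^n(e)=\delta^n(e)\cdot a=0$ for all $a\in R$ and $n\in\mathbb{N}_{>0}$; (ii) $e=eX^0$ is a weak unit in $R[X;\mathrm{id}_R,\delta]$, i.e. $e\cdot q=q\cdot e=\alpha(q)$ for all $q\in R[X;\mathrm{id}_R,\delta]$; (iii) for every $q=\sum_{i=0}^nq_iX^i\in R[X;\mathrm{id}_R,\delta]$, $\ eX\cdot q-q\cdot eX=\sum_{i=0}^n\alpha(\delta(q_i))X^i$.
   Context: A hom-associative ring is a triple $(R,\cdot,\alpha)$ where $R$ is an abelian group with a biadditive (not necessarily associative or unital) multiplication and an additive map $\alpha$ with $\alpha(a)\cdot(b\cdot c)=(a\cdot b)\cdot\alpha(c)$ for all $a,b,c$. It is weakly unital with weak unit $e$ if $e\cdot a=a\cdot e=\alpha(a)$ for all $a\in R$. A derivation is an additive map $\delta$ with $\delta(ab)=a\delta(b)+\delta(a)b$. The differential polynomial ring $R[X;\mathrm{id}_R,\delta]$ is the set of formal sums $\sum_{i\in\mathbb{N}}a_iX^i$ ($a_i\in R$, finitely many nonzero) with coefficientwise addition and the distributive multiplication $aX^m\cdot bX^n=\sum_{i=0}^m\binom{m}{i}\big(a\cdot\delta^{m-i}(b)\big)X^{i+n}$; $R$ is identified with $RX^0$,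 and $eX$ denotes the element with coefficient $e$ at $X^1$ and $0$ elsewhere. $\mathbb{N}$ is the non-negative integers, $\mathbb{N}_{>0}$ the positive ones. The homogeneous extension of $\alpha$ is $\alpha\left(\sum_ia_iX^i\right):=\sum_i\alpha(a_i)X^i$. *)

theory Defs
  imports "HOL-Computational_Algebra.Polynomial"
begin

definition hom_assoc_ring :: "('a::ab_group_add \<Rightarrow> 'a \<Rightarrow> 'a) \<Rightarrow> ('a \<Rightarrow> 'a) \<Rightarrow> bool" where
  "hom_assoc_ring mul alpha \<longleftrightarrow>
     (\<forall>a b c. mul (a + b) c = mul a c + mul b c) \<and>
     (\<forall>a b c. mul a (b + c) = mul a b + mul a c) \<and>
     (\<forall>a b. alpha (a + b) = alpha a + alpha b) \<and>
     (\<forall>a b c. mul (alpha a) (mul b c) = mul (mul a b) (alpha c))"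

definition weak_unit :: "('a \<Rightarrow> 'a \<Rightarrow> 'a) \<Rightarrow> ('a \<Rightarrow> 'a) \<Rightarrow> 'a \<Rightarrow> bool" where
  "weak_unit mul alpha e \<longleftrightarrow> (\<forall>a. mul e a = alpha a \<and> mul a e = alpha a)"

definition derivation :: "('a::ab_group_add \<Rightarrow> 'a \<Rightarrow> 'a) \<Rightarrow> ('a \<Rightarrow> 'a) \<Rightarrow> bool" where
  "derivation mul delta \<longleftrightarrow>
     (\<forall>a b. delta (a + b) = delta a + delta b) \<and>
     (\<forall>a b. delta (mul a b) = mul a (delta b) + mul (delta a) b)"

definition nsmul :: "nat \<Rightarrow> 'a::comm_monoid_add \<Rightarrow> 'a" where
  "nsmul n x = (\<Sum>j<n. x)"

text \<open>Multiplication of the differential polynomial ring R[X; id, delta]: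
  distributive extension of a X^m * b X^n = sum_{i=0}^m (m choose i) (a * delta^(m-i) b) X^(i+n).\<close>
definition dp_mult :: "('a::ab_group_add \<Rightarrow> 'a \<Rightarrow> 'a) \<Rightarrow> ('a \<Rightarrow> 'a) \<Rightarrow> 'a poly \<Rightarrow> 'a poly \<Rightarrow> 'a poly" where
  "dp_mult mul delta p q =
     (\<Sum>m\<le>degree p. \<Sum>n\<le>degree q. \<Sum>i\<le>m.
        monom (nsmul (m choose i) (mul (coeff p m) ((delta ^^ (m - i)) (coeff q n)))) (i + n))"

end

theory Submission
  imports Defs
begin

lemma nsmul_0 [simp]: "nsmul k (0::'a::comm_monoid_add) = 0"
  by (simp add: nsmul_def)

lemma funpow_fix0:
  fixes d :: "'a::zero \<Rightarrow> 'a"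
  assumes "d 0 = 0" shows "(d ^^ k) 0 = 0"
  by (induction k) (auto simp: assms)

lemma nsmul_1 [simp]: "nsmul (Suc 0) x = x"
  by (simp add: nsmul_def)

lemma dp_mult_ext:
  assumes m0: "\<And>x. mul 0 x = (0::'a::ab_group_add)" and m0': "\<And>x. mul x 0 = 0" and dz: "delta 0 = 0"
    and M: "degree p \<le> M" and N: "degree q \<le> N"
  shows "dp_mult mul delta p q =
     (\<Sum>m\<le>M. \<Sum>n\<le>N. \<Sum>i\<le>m.
        monom (nsmul (m choose i) (mul (coeff p m) ((delta ^^ (m - i)) (coeff q n)))) (i + n))"
proof -
  have "dp_mult mul delta p q =
     (\<Sum>m\<le>M. \<Sum>n\<le>degree q. \<Sum>i\<le>m.
        monom (nsmul (m choose i) (mul (coeff p m) ((delta ^^ (m - i)) (coeff q n)))) (i + n))"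
    unfolding dp_mult_def
    by (rule sum.mono_neutral_left) (use M in \<open>auto simp: coeff_eq_0 m0\<close>)
  also have "\<dots> = (\<Sum>m\<le>M. \<Sum>n\<le>N. \<Sum>i\<le>m.
        monom (nsmul (m choose i) (mul (coeff p m) ((delta ^^ (m - i)) (coeff q n)))) (i + n))"
    by (rule sum.cong[OF refl], rule sum.mono_neutral_left) (use N in \<open>auto simp: coeff_eq_0 m0' funpow_fix0[of delta, OF dz]\<close>)
  finally show ?thesis .
qed

lemma coeff_sum_monoms:
  "coeff (\<Sum>n\<le>D. monom (f n) n) k = (if k \<le> D then f k else 0)"
  by (simp add: coeff_sum coeff_monom)

lemma map_poly_as_sum:
  assumes "f 0 = 0"
  shows "map_poly f q = (\<Sum>n\<le>degree q. monom (f (coeff q n)) n)"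
  by (rule poly_eqI) (auto simp: coeff_sum_monoms coeff_map_poly assms coeff_eq_0)

theorem mainTheorem10:
  fixes mul :: "'a::ab_group_add \<Rightarrow> 'a \<Rightarrow> 'a"
    and alpha delta :: "'a \<Rightarrow> 'a"
    and e :: 'a
  assumes "hom_assoc_ring mul alpha"
    and "weak_unit mul alpha e"
    and "derivation mul delta"
    and "alpha \<circ> delta = delta \<circ> alpha"
  shows "(\<forall>a. \<forall>n>0. mul a ((delta ^^ n) e) = 0 \<and> mul ((delta ^^ n) e) a = 0)
     \<and> (\<forall>q. dp_mult mul delta (monom e 0) q = map_poly alpha q
           \<and> dp_mult mul delta q (monom e 0) = map_poly alpha q)
     \<and> (\<forall>q. dp_mult mul delta (monom e 1) q - dp_mult mul delta q (monom e 1)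
           = (\<Sum>i\<le>degree q. monom (alpha (delta (coeff q i))) i))"
proof -
  have addl: "\<And>a b c. mul (a + b) c = mul a c + mul b c"
    and addr: "\<And>a b c. mul a (b + c) = mul a b + mul a c"
    and aadd: "\<And>a b. alpha (a + b) = alpha a + alpha b"
    using assms(1) unfolding hom_assoc_ring_def by auto
  have eu: "\<And>a. mul e a = alpha a" "\<And>a. mul a e = alpha a"
    using assms(2) unfolding weak_unit_def by auto
  have dadd: "\<And>a b. delta (a + b) = delta a + delta b"
    and dmul: "\<And>a b. delta (mul a b) = mul a (delta b) + mul (delta a) b"
    using assms(3) unfolding derivation_def by auto
  have comm: "\<And>a. alpha (delta a) = delta (alpha a)"
    using assms(4) by (metis comp_apply)
  have m0: "\<And>x. mul 0 x = 0" using addl[of 0 0] by simp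
  have m0': "\<And>x. mul x 0 = 0" using addr[of _ 0 0] by simp
  have a0: "alpha 0 = 0" using aadd[of 0 0] by simp
  have d0: "delta 0 = 0" using dadd[of 0 0] by simp
  have P1: "\<forall>a. mul a ((delta ^^ Suc n) e) = 0 \<and> mul ((delta ^^ Suc n) e) a = 0" for n
  proof (induction n)
    case 0
    show ?case
    proof
      fix a
      have "delta (mul e a) = mul e (delta a) + mul (delta e) a" by (rule dmul)
      hence 1: "mul (delta e) a = 0" by (simp add: eu comm)
      have "delta (mul a e) = mul a (delta e) + mul (delta a) e" by (rule dmul)
      hence 2: "mul a (delta e) = 0" by (simp add: eu comm)
      show "mul a ((delta ^^ Suc 0) e) = 0 \<and> mul ((delta ^^ Suc 0) e) a = 0"
        using 1 2 by simp
    qed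
  next
    case (Suc n)
    show ?case
    proof
      fix a
      have "delta (mul a ((delta ^^ Suc n) e)) = mul a (delta ((delta ^^ Suc n) e)) + mul (delta a) ((delta ^^ Suc n) e)" by (rule dmul)
      hence 1: "mul a ((delta ^^ Suc (Suc n)) e) = 0" using Suc by (simp add: d0)
      have "delta (mul ((delta ^^ Suc n) e) a) = mul ((delta ^^ Suc n) e) (delta a) + mul (delta ((delta ^^ Suc n) e)) a" by (rule dmul)
      hence 2: "mul ((delta ^^ Suc (Suc n)) e) a = 0" using Suc by (simp add: d0)
      show "mul a ((delta ^^ Suc (Suc n)) e) = 0 \<and> mul ((delta ^^ Suc (Suc n)) e) a = 0"
        using 1 2 by simp
    qed
  qed
  have P: "\<And>a n. n > 0 \<Longrightarrow> mul a ((delta ^^ n) e) = 0 \<and> mul ((delta ^^ n) e) a = 0"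
    using P1 gr0_conv_Suc by metis
  have inner: "(\<Sum>i\<le>m. monom (nsmul (m choose i) (mul x ((delta ^^ (m - i)) e))) (i + k))
       = monom (alpha x) (m + k)" for m k x
  proof -
    have "(\<Sum>i\<le>m. monom (nsmul (m choose i) (mul x ((delta ^^ (m - i)) e))) (i + k))
      = (\<Sum>i<Suc m. monom (nsmul (m choose i) (mul x ((delta ^^ (m - i)) e))) (i + k))"
      by (simp add: lessThan_Suc_atMost)
    also have "\<dots> = (\<Sum>i<m. monom (nsmul (m choose i) (mul x ((delta ^^ (m - i)) e))) (i + k))
        + monom (alpha x) (m + k)"
      by (simp add: eu)
    also have "(\<Sum>i<m. monom (nsmul (m choose i) (mul x ((delta ^^ (m - i)) e))) (i + k)) = 0"
      by (rule sum.neutral) (simp add: P)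
    finally show ?thesis by simp
  qed
  have ii: "dp_mult mul delta (monom e 0) q = map_poly alpha q
           \<and> dp_mult mul delta q (monom e 0) = map_poly alpha q" for q
  proof
    have "dp_mult mul delta (monom e 0) q = (\<Sum>m\<le>0. \<Sum>n\<le>degree q. \<Sum>i\<le>m.
        monom (nsmul (m choose i) (mul (coeff (monom e 0) m) ((delta ^^ (m - i)) (coeff q n)))) (i + n))"
      by (rule dp_mult_ext[where mul=mul and delta=delta, OF m0 m0' d0]) (use degree_monom_le[of e 1] degree_monom_le[of e 0] in simp_all)
    also have "\<dots> = (\<Sum>n\<le>degree q. monom (alpha (coeff q n)) n)"
      by (simp add: eu)
    finally show "dp_mult mul delta (monom e 0) q = map_poly alpha q"
      by (simp add: map_poly_as_sum a0)
  next
    have "dp_mult mul delta q (monom e 0) = (\<Sum>m\<le>degree q. \<Sum>n\<le>0. \<Sum>i\<le>m.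
        monom (nsmul (m choose i) (mul (coeff q m) ((delta ^^ (m - i)) (coeff (monom e 0) n)))) (i + n))"
      by (rule dp_mult_ext[where mul=mul and delta=delta, OF m0 m0' d0]) (use degree_monom_le[of e 1] degree_monom_le[of e 0] in simp_all)
    also have "\<dots> = (\<Sum>m\<le>degree q. monom (alpha (coeff q m)) m)"
      using inner[of _ _ 0] by simp
    finally show "dp_mult mul delta q (monom e 0) = map_poly alpha q"
      by (simp add: map_poly_as_sum a0)
  qed
  have iii: "dp_mult mul delta (monom e 1) q - dp_mult mul delta q (monom e 1)
           = (\<Sum>i\<le>degree q. monom (alpha (delta (coeff q i))) i)" for q
  proof -
    have "dp_mult mul delta (monom e 1) q = (\<Sum>m\<le>1. \<Sum>n\<le>degree q. \<Sum>i\<le>m.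
        monom (nsmul (m choose i) (mul (coeff (monom e 1) m) ((delta ^^ (m - i)) (coeff q n)))) (i + n))"
      by (rule dp_mult_ext[where mul=mul and delta=delta, OF m0 m0' d0]) (use degree_monom_le[of e 1] degree_monom_le[of e 0] in simp_all)
    also have "\<dots> = (\<Sum>n\<le>degree q. monom (alpha (delta (coeff q n))) n + monom (alpha (coeff q n)) (Suc n))"
      by (simp add: eu m0 coeff_monom)
    finally have L: "dp_mult mul delta (monom e 1) q = \<dots>" .
    have "dp_mult mul delta q (monom e 1) = (\<Sum>m\<le>degree q. \<Sum>n\<le>1. \<Sum>i\<le>m.
        monom (nsmul (m choose i) (mul (coeff q m) ((delta ^^ (m - i)) (coeff (monom e 1) n)))) (i + n))"
      by (rule dp_mult_ext[where mul=mul and delta=delta, OF m0 m0' d0]) (use degree_monom_le[of e 1] degree_monom_le[of e 0] in simp_all)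
    also have "\<dots> = (\<Sum>m\<le>degree q. monom (alpha (coeff q m)) (Suc m))"
      using inner[of _ _ 1] by (simp add: coeff_monom m0' d0 funpow_fix0[of delta, OF d0])
    finally have R: "dp_mult mul delta q (monom e 1) = \<dots>" .
    show ?thesis unfolding L R by (simp add: sum.distrib)
  qed
  show ?thesis using P ii iii by blast
qed

end
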